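(* Let $\varepsilon>0$, $\beta,\delta\in(0,1)$, and let $G$ be a graph with at least one edge. Run: set $T=-\frac8\varepsilon\ln\frac4\beta$, $\tilde T=T+\mathrm{Lap}(4/\varepsilon)$; for $\tau=1,2,4,8,\dots$ compute $\tilde Q_\tau=Q_{\mathrm{LP\text{-}Del\text{-}N}}(G,\tau)+\mathrm{Lap}(4/\varepsilon)$ and stop at the first $\tau$ with $\tilde Q_\tau>\tilde T$; output $$\tau^*=3\tau+3|Q_{\mathrm{LP\text{-}Del\text{-}N}}(G,\tau)|+\mathrm{Lap}(6/\varepsilon)+\frac6\varepsilon\ln\max\Big(\frac1\delta,\frac2\beta\Big)+1.$$ Then with probability at least $1-\beta$, $$\tau^*\le6\deg(G)+\frac{24}\varepsilon\ln\log(4\deg(G))+\frac{48}\varepsilon\ln\frac4\beta+\frac{12}\varepsilon\ln\max\Big(\frac1\delta,\frac2\beta\Big)+1$$ and $$N_{\tau^*}(G)\le\frac{24}\varepsilon\ln\log(4\deg(G))+\frac{48}\varepsilon\ln\frac4\beta.$$ Furthermore, with probability at least $1-\delta$, $\tau^*+N_{\tau^*}(G)\le2\tau^*$.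
   Context: Graphs are finite, simple, undirected; $\deg(G)$ is the maximum degree; $E(v)$ is the set of edges at $v$; $N_t(G)$ is the number of nodes of degree at least $t$. $Q_{\mathrm{LP\text{-}Del\text{-}N}}(G,\tau)$ is the optimal value of the LP: maximize $-\sum_{v}x_v$ subject to $y_e\ge1-x_{v'}-x_{v''}$ for every edge $e=(v',v'')$, $\sum_{e\in E(v)}y_e\le\tau$ for every node $v$, and $x_v,y_e\in[0,1]$. $\mathrm{Lap}(b)$ has density $\frac1{2b}e^{-|x|/b}$; all draws are independent. $\ln$ is the natural logarithm and $\log$ the base-2 logarithm. *)

theory Defs
  imports "HOL-Probability.Probability"
begin

definition simple_graph :: "'a set \<Rightarrow> 'a set set \<Rightarrow> bool" where
  "simple_graph V E \<longleftrightarrow> finite V \<and>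
     (\<forall>e\<in>E. \<exists>u w. e = {u, w} \<and> u \<noteq> w \<and> u \<in> V \<and> w \<in> V)"

definition edges_at :: "'a set set \<Rightarrow> 'a \<Rightarrow> 'a set set" where
  "edges_at E v = {e\<in>E. v \<in> e}"

definition vdeg :: "'a set set \<Rightarrow> 'a \<Rightarrow> nat" where
  "vdeg E v = card (edges_at E v)"

definition max_deg :: "'a set \<Rightarrow> 'a set set \<Rightarrow> nat" where
  "max_deg V E = Max (vdeg E ` V)"

definition N_ge :: "'a set \<Rightarrow> 'a set set \<Rightarrow> real \<Rightarrow> nat" where
  "N_ge V E t = card {v\<in>V. real (vdeg E v) \<ge> t}"

definition lp_feasible :: "'a set \<Rightarrow> 'a set set \<Rightarrow> real \<Rightarrow> ('a \<Rightarrow> real) \<Rightarrow> ('a set \<Rightarrow> real) \<Rightarrow> bool" where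
  "lp_feasible V E \<tau> x y \<longleftrightarrow>
     (\<forall>v\<in>V. 0 \<le> x v \<and> x v \<le> 1) \<and>
     (\<forall>e\<in>E. 0 \<le> y e \<and> y e \<le> 1) \<and>
     (\<forall>e\<in>E. \<forall>u w. e = {u, w} \<and> u \<noteq> w \<longrightarrow> y e \<ge> 1 - x u - x w) \<and>
     (\<forall>v\<in>V. (\<Sum>e\<in>edges_at E v. y e) \<le> \<tau>)"

definition Q_LP :: "'a set \<Rightarrow> 'a set set \<Rightarrow> real \<Rightarrow> real" where
  "Q_LP V E \<tau> = Sup {- (\<Sum>v\<in>V. x v) | x y. lp_feasible V E \<tau> x y}"

text \<open>Indices of the independent Laplace noises used by the algorithm:
  NT = threshold noise, NQ k = noise for the query at tau = 2^k, NF = final noise.\<close>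
datatype noise_idx = NT | NQ nat | NF

definition laplace_density :: "real \<Rightarrow> real \<Rightarrow> ennreal" where
  "laplace_density b x = ennreal (1 / (2 * b) * exp (- \<bar>x\<bar> / b))"

definition alg_T :: "real \<Rightarrow> real \<Rightarrow> real" where
  "alg_T \<epsilon> \<beta> = - (8 / \<epsilon>) * ln (4 / \<beta>)"

definition alg_passes :: "'a set \<Rightarrow> 'a set set \<Rightarrow> real \<Rightarrow> real \<Rightarrow> (noise_idx \<Rightarrow> real) \<Rightarrow> nat \<Rightarrow> bool" where
  "alg_passes V E \<epsilon> \<beta> z k \<longleftrightarrow> Q_LP V E (2 ^ k) + z (NQ k) > alg_T \<epsilon> \<beta> + z NT"

definition alg_stops_at :: "'a set \<Rightarrow> 'a set set \<Rightarrow> real \<Rightarrow> real \<Rightarrow> (noise_idx \<Rightarrow> real) \<Rightarrow> nat \<Rightarrow> bool" where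
  "alg_stops_at V E \<epsilon> \<beta> z k \<longleftrightarrow> alg_passes V E \<epsilon> \<beta> z k \<and> (\<forall>j<k. \<not> alg_passes V E \<epsilon> \<beta> z j)"

definition alg_output :: "'a set \<Rightarrow> 'a set set \<Rightarrow> real \<Rightarrow> real \<Rightarrow> real \<Rightarrow> (noise_idx \<Rightarrow> real) \<Rightarrow> nat \<Rightarrow> real" where
  "alg_output V E \<epsilon> \<beta> \<delta> z k =
     3 * 2 ^ k + 3 * \<bar>Q_LP V E (2 ^ k)\<bar> + z NF + 6 / \<epsilon> * ln (max (1 / \<delta>) (2 / \<beta>)) + 1"

end

theory Submission
  imports Defs "HOL-Real_Asymp.Real_Asymp"
begin

lemma sg_finE: "simple_graph V E \<Longrightarrow> finite E"
proof -
  assume G: "simple_graph V E"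
  have *: "\<forall>e\<in>E. \<exists>u w. e = {u, w} \<and> u \<noteq> w \<and> u \<in> V \<and> w \<in> V"
    using G unfolding simple_graph_def by (rule conjunct2)
  have "E \<subseteq> Pow V"
  proof
    fix e assume "e \<in> E"
    then obtain u w where "e = {u, w}" "u \<in> V" "w \<in> V" using * by blast
    then show "e \<in> Pow V" by simp
  qed
  moreover have "finite V" using G unfolding simple_graph_def by (rule conjunct1)
  ultimately show ?thesis by (meson finite_Pow_iff finite_subset)
qed
lemma feas_in:
  "lp_feasible V E \<tau> x y \<Longrightarrow> - (\<Sum>v\<in>V. x v) \<in> {- (\<Sum>v\<in>V. x v) | x y. lp_feasible V E \<tau> x y}"
  by blast
lemma Q_set_ne:
  fixes V :: "'a set" and E :: "'a set set"
  assumes "(\<tau>::real) \<ge> 0"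
  shows "- (\<Sum>v\<in>V. (\<lambda>_. 1::real) v) \<in> {- (\<Sum>v\<in>V. x v) | x y. lp_feasible V E \<tau> x y}"
proof -
  have "lp_feasible V E \<tau> (\<lambda>_. 1) (\<lambda>_. 0)" using assms unfolding lp_feasible_def
    by (intro conjI ballI allI impI) simp_all
  then show ?thesis by (rule feas_in)
qed

lemma feas_le0:
  assumes "lp_feasible V E \<tau> x y"
  shows "- (\<Sum>v\<in>V. x v) \<le> 0"
proof -
  have F1: "\<forall>v\<in>V. 0 \<le> x v \<and> x v \<le> 1" using assms unfolding lp_feasible_def by (rule conjunct1)
  then have "(\<Sum>v\<in>V. x v) \<ge> 0" by (intro sum_nonneg) blast
  then show ?thesis by linarith
qed

lemma Q_set_bdd:
  "bdd_above {- (\<Sum>v\<in>V. x v) | x y. lp_feasible V E (\<tau>::real) x y}"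
  unfolding bdd_above_def
  using feas_le0 by blast

lemma Q_le0:
  fixes V :: "'a set" and E :: "'a set set"
  assumes "(\<tau>::real) \<ge> 0"
  shows "Q_LP V E \<tau> \<le> 0"
  unfolding Q_LP_def
proof (rule cSup_least)
  show "{- (\<Sum>v\<in>V. x v) | x y. lp_feasible V E \<tau> x y} \<noteq> {}" using Q_set_ne[OF assms, of V E] by blast
qed (use feas_le0 in blast)

lemma vdeg_le_max:
  assumes "simple_graph V E" "v \<in> V"
  shows "vdeg E v \<le> max_deg V E"
proof -
  have "finite V" using assms(1) unfolding simple_graph_def by (rule conjunct1)
  then show ?thesis using assms(2) unfolding max_deg_def by simp
qed

lemma Q_zero:
  assumes G: "simple_graph V E" and t: "real (max_deg V E) \<le> \<tau>"
  shows "Q_LP V E \<tau> = 0"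
proof -
  have t0: "\<tau> \<ge> 0" using t by linarith
  have "lp_feasible V E \<tau> (\<lambda>_. 0) (\<lambda>_. 1)"
    unfolding lp_feasible_def
  proof (intro conjI ballI allI impI)
    fix v assume v: "v \<in> V"
    have "(\<Sum>e\<in>edges_at E v. (\<lambda>_. 1::real) e) = real (vdeg E v)"
      by (simp add: vdeg_def)
    also have "\<dots> \<le> \<tau>" using vdeg_le_max[OF G v] t by linarith
    finally show "(\<Sum>e\<in>edges_at E v. (\<lambda>_. 1::real) e) \<le> \<tau>" .
  qed simp_all
  then have "- (\<Sum>v\<in>V. (\<lambda>_. 0::real) v) \<in> {- (\<Sum>v\<in>V. x v) | x y. lp_feasible V E \<tau> x y}" by (rule feas_in)
  then have "0 \<in> {- (\<Sum>v\<in>V. x v) | x y. lp_feasible V E \<tau> x y}" by simp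
  then have "0 \<le> Q_LP V E \<tau>" unfolding Q_LP_def
    by (intro cSup_upper Q_set_bdd)
  with Q_le0[OF t0, of V E] show ?thesis by linarith
qed

lemma N_bound_eta:
  assumes G: "simple_graph V E" and t0: "(\<tau>::real) \<ge> 0"
    and tt: "t \<ge> 3 * \<tau> + 3 * \<bar>Q_LP V E \<tau>\<bar> + 1"
    and eta: "\<eta> > 0" "\<eta> \<le> 1/3"
  shows "real (N_ge V E t) \<le> 3 * (\<bar>Q_LP V E \<tau>\<bar> + \<eta>)"
proof -
  let ?S = "{- (\<Sum>v\<in>V. x v) | x y. lp_feasible V E \<tau> x y}"
  define q where "q = \<bar>Q_LP V E \<tau>\<bar>"
  have qQ: "Q_LP V E \<tau> = - q" using Q_le0[OF t0, of V E] unfolding q_def by linarith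
  have "Q_LP V E \<tau> - \<eta> < Sup ?S" using eta unfolding Q_LP_def by linarith
  then obtain z where "z \<in> ?S" "Q_LP V E \<tau> - \<eta> < z"
    using less_cSup_iff[of ?S] Q_set_ne[OF t0, of V E] Q_set_bdd[of V E \<tau>] by blast
  then obtain x y where feas: "lp_feasible V E \<tau> x y" and sx: "(\<Sum>v\<in>V. x v) < q + \<eta>"
    using qQ by auto
  define s where "s = (\<Sum>v\<in>V. x v)"
  have finV: "finite V" using G unfolding simple_graph_def by (rule conjunct1)
  have GE: "\<forall>e\<in>E. \<exists>u w. e = {u, w} \<and> u \<noteq> w \<and> u \<in> V \<and> w \<in> V"
    using G unfolding simple_graph_def by (rule conjunct2)
  have finE: "finite E" using sg_finE[OF G] .
  have F1: "\<forall>v\<in>V. 0 \<le> x v \<and> x v \<le> 1" using feas unfolding lp_feasible_def by (rule conjunct1)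
  have EC: "\<forall>e\<in>E. \<forall>u w. e = {u, w} \<and> u \<noteq> w \<longrightarrow> y e \<ge> 1 - x u - x w"
    using feas unfolding lp_feasible_def by (elim conjE)
  have F4: "\<forall>v\<in>V. (\<Sum>e\<in>edges_at E v. y e) \<le> \<tau>"
    using feas unfolding lp_feasible_def by (elim conjE)
  have x01: "\<And>v. v \<in> V \<Longrightarrow> 0 \<le> x v \<and> x v \<le> 1" using F1 by blast
  have key: "x v \<ge> 1/3" if v: "v \<in> V" and dv: "t \<le> real (vdeg E v)" for v
  proof -
    define d where "d = real (vdeg E v)"
    have d0: "d > 0" using dv tt t0 abs_ge_zero[of "Q_LP V E \<tau>"] unfolding d_def by linarith
    define oth where "oth = (\<lambda>e. SOME w. w \<noteq> v \<and> e = {v, w} \<and> w \<in> V)"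
    have oth: "oth e \<noteq> v \<and> e = {v, oth e} \<and> oth e \<in> V" if e: "e \<in> edges_at E v" for e
    proof -
      from e have eE: "e \<in> E" and ve: "v \<in> e" unfolding edges_at_def by auto
      from bspec[OF GE eE] obtain u w where uw: "e = {u, w}" "u \<noteq> w" "u \<in> V" "w \<in> V"
        by blast
      have "\<exists>w. w \<noteq> v \<and> e = {v, w} \<and> w \<in> V"
      proof (cases "v = u")
        case True
        then have "w \<noteq> v \<and> e = {v, w} \<and> w \<in> V" using uw by simp
        then show ?thesis by blast
      next
        case False
        then have "v = w" using uw ve by simp
        then have "u \<noteq> v \<and> e = {v, u} \<and> u \<in> V" using uw by (simp add: insert_commute)
        then show ?thesis by blast
      qed
      then show ?thesis unfolding oth_def by (rule someI_ex)
    qed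
    have inj: "inj_on oth (edges_at E v)"
    proof (rule inj_onI)
      fix e1 e2 assume "e1 \<in> edges_at E v" "e2 \<in> edges_at E v" "oth e1 = oth e2"
      then show "e1 = e2" using oth[of e1] oth[of e2] by simp
    qed
    have finEv: "finite (edges_at E v)" using finE unfolding edges_at_def by auto
    have "(\<Sum>e\<in>edges_at E v. 1 - x v - x (oth e)) \<le> (\<Sum>e\<in>edges_at E v. y e)"
    proof (rule sum_mono)
      fix e assume e: "e \<in> edges_at E v"
      then have "e \<in> E" unfolding edges_at_def by auto
      have o: "e = {v, oth e} \<and> v \<noteq> oth e" using oth[OF e] by auto
      from bspec[OF EC \<open>e \<in> E\<close>] have "\<forall>w. e = {v, w} \<and> v \<noteq> w \<longrightarrow> y e \<ge> 1 - x v - x w" by (rule spec)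
      then have "e = {v, oth e} \<and> v \<noteq> oth e \<longrightarrow> y e \<ge> 1 - x v - x (oth e)" by (rule spec)
      then show "1 - x v - x (oth e) \<le> y e" using o by (rule mp)
    qed
    also have "\<dots> \<le> \<tau>" using F4 v by blast
    finally have A: "(\<Sum>e\<in>edges_at E v. 1 - x v - x (oth e)) \<le> \<tau>" .
    have B: "(\<Sum>e\<in>edges_at E v. 1 - x v - x (oth e)) = d * (1 - x v) - (\<Sum>e\<in>edges_at E v. x (oth e))"
      unfolding d_def vdeg_def by (simp add: sum_subtractf)
    have "(\<Sum>e\<in>edges_at E v. x (oth e)) = (\<Sum>w\<in>oth ` edges_at E v. x w)"
      using sum.reindex[OF inj, of x] by simp
    also have "\<dots> \<le> s" unfolding s_def
      using oth x01 finV by (intro sum_mono2) blast+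
    finally have C: "(\<Sum>e\<in>edges_at E v. x (oth e)) \<le> s" .
    have "d * (1 - x v) \<le> \<tau> + s" using A B C by linarith
    also have "\<dots> < \<tau> + q + 1/3" using sx eta unfolding s_def by linarith
    also have "\<dots> \<le> d / 3" using tt dv unfolding q_def d_def by linarith
    finally have "d * (1 - x v) < d * (1/3)" by simp
    then have "1 - x v < 1/3" using d0 by (simp add: mult_less_cancel_left_pos)
    then show ?thesis by linarith
  qed
  have sub: "{v\<in>V. t \<le> real (vdeg E v)} \<subseteq> {v\<in>V. x v \<ge> 1/3}" using key by auto
  have "real (N_ge V E t) \<le> real (card {v\<in>V. x v \<ge> 1/3})"
    unfolding N_ge_def using card_mono[OF _ sub] finV by simp
  also have "\<dots> = 3 * (\<Sum>v\<in>{v\<in>V. x v \<ge> 1/3}. 1/3)" by simp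
  also have "\<dots> \<le> 3 * (\<Sum>v\<in>{v\<in>V. x v \<ge> 1/3}. x v)"
    by (intro mult_left_mono sum_mono) auto
  also have "\<dots> \<le> 3 * s" unfolding s_def
    using x01 finV by (intro mult_left_mono sum_mono2) auto
  also have "\<dots> \<le> 3 * (q + \<eta>)" using sx unfolding s_def by (simp add: algebra_simps)
  finally show ?thesis unfolding q_def .
qed

lemma N_bound:
  assumes G: "simple_graph V E" and t0: "(\<tau>::real) \<ge> 0"
    and tt: "t \<ge> 3 * \<tau> + 3 * \<bar>Q_LP V E \<tau>\<bar> + 1"
  shows "real (N_ge V E t) \<le> 3 * \<bar>Q_LP V E \<tau>\<bar>"
proof (rule field_le_epsilon)
  fix e :: real assume e: "e > 0"
  have "real (N_ge V E t) \<le> 3 * (\<bar>Q_LP V E \<tau>\<bar> + min (e/3) (1/3))"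
    using e by (intro N_bound_eta[OF G t0 tt]) auto
  moreover have "min (e/3) (1/3) \<le> e/3" by simp
  ultimately show "real (N_ge V E t) \<le> 3 * \<bar>Q_LP V E \<tau>\<bar> + e" by (simp add: distrib_left)
qed

lemma lap_upper_nn:
  fixes b a :: real
  assumes b: "b > 0" and a: "a \<ge> 0"
  shows "(\<integral>\<^sup>+x. laplace_density b x * indicator {a..} x \<partial>lborel) = ennreal (exp (- a / b) / 2)"
proof -
  have "(\<integral>\<^sup>+x. laplace_density b x * indicator {a..} x \<partial>lborel)
      = (\<integral>\<^sup>+x. ennreal (exp (- x / b) / (2 * b)) * indicator {a..} x \<partial>lborel)"
    using a by (intro nn_integral_cong) (auto simp: laplace_density_def split: split_indicator)
  also have "\<dots> = ennreal (0 - (- exp (- a / b) / 2))"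
  proof (rule nn_integral_FTC_atLeast)
    show "((\<lambda>x::real. - exp (- x / b) / 2) \<longlongrightarrow> 0) at_top"
      using b by real_asymp
  qed (use b in \<open>auto intro!: derivative_eq_intros simp: field_simps\<close>)
  finally show ?thesis by simp
qed

lemma lap_lower_nn:
  fixes b a :: real
  assumes b: "b > 0" and a: "a \<ge> 0"
  shows "(\<integral>\<^sup>+x. laplace_density b x * indicator {..< -a} x \<partial>lborel) \<le> ennreal (exp (- a / b) / 2)"
proof -
  have "(\<integral>\<^sup>+x. laplace_density b x * indicator {..< -a} x \<partial>lborel)
     = (\<integral>\<^sup>+x. laplace_density b x * indicator {..< -a} x \<partial>(distr lborel borel uminus))"
    by (simp add: lborel_distr_uminus)
  also have "\<dots> = (\<integral>\<^sup>+x. laplace_density b (- x) * indicator {..< -a} (- x) \<partial>lborel)"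
    by (subst nn_integral_distr) (auto simp: laplace_density_def)
  also have "\<dots> \<le> (\<integral>\<^sup>+x. laplace_density b x * indicator {a..} x \<partial>lborel)"
    by (intro nn_integral_mono) (auto simp: laplace_density_def split: split_indicator)
  finally show ?thesis using lap_upper_nn[OF b a] by simp
qed

lemma lap_upper:
  fixes b a :: real
  assumes P: "prob_space M" and D: "distributed M lborel Y (laplace_density b)"
    and b: "b > 0" and a: "a \<ge> 0"
  shows "measure M {\<omega>\<in>space M. Y \<omega> \<ge> a} = exp (- a / b) / 2"
proof -
  have "{\<omega>\<in>space M. Y \<omega> \<ge> a} = Y -` {a..} \<inter> space M" by auto
  then have "emeasure M {\<omega>\<in>space M. Y \<omega> \<ge> a} = ennreal (exp (- a / b) / 2)"
    using distributed_emeasure[OF D, of "{a..}"] lap_upper_nn[OF b a] by simp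
  then show ?thesis by (simp add: measure_def)
qed

lemma lap_lower:
  fixes b a :: real
  assumes P: "prob_space M" and D: "distributed M lborel Y (laplace_density b)"
    and b: "b > 0" and a: "a \<ge> 0"
  shows "measure M {\<omega>\<in>space M. Y \<omega> < - a} \<le> exp (- a / b) / 2"
proof -
  have "{\<omega>\<in>space M. Y \<omega> < - a} = Y -` {..< -a} \<inter> space M" by auto
  then have "emeasure M {\<omega>\<in>space M. Y \<omega> < - a} \<le> ennreal (exp (- a / b) / 2)"
    using distributed_emeasure[OF D, of "{..< -a}"] lap_lower_nn[OF b a] by simp
  then have "enn2real (emeasure M {\<omega>\<in>space M. Y \<omega> < - a}) \<le> exp (- a / b) / 2"
    by (intro enn2real_leI) auto
  then show ?thesis by (simp add: measure_def)
qed

lemma first_stop: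
  assumes "alg_passes V E \<epsilon> \<beta> z k1"
  shows "alg_stops_at V E \<epsilon> \<beta> z (LEAST k. alg_passes V E \<epsilon> \<beta> z k)
       \<and> (LEAST k. alg_passes V E \<epsilon> \<beta> z k) \<le> k1"
  unfolding alg_stops_at_def
  using LeastI[of "alg_passes V E \<epsilon> \<beta> z", OF assms] Least_le[of "alg_passes V E \<epsilon> \<beta> z", OF assms]
    not_less_Least[of _ "alg_passes V E \<epsilon> \<beta> z"] by blast

lemma ln_split: "(L::real) > 0 \<Longrightarrow> \<beta> > 0 \<Longrightarrow> ln (4 * L / \<beta>) = ln L + ln (4 / \<beta>)"
  by (simp add: ln_mult ln_div)

lemma pointwise1:
  fixes z :: "noise_idx \<Rightarrow> real"
  assumes G: "simple_graph V E"
    and eps: "\<epsilon> > 0" and beta: "0 < \<beta>" "\<beta> < 1" and delta: "0 < \<delta>" "\<delta> < 1"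
    and D1: "1 \<le> max_deg V E"
    and k0a: "real (max_deg V E) \<le> 2 ^ k0" and k0b: "2 ^ k0 < 2 * real (max_deg V E)"
    and k0c: "real (k0 + 1) \<le> log 2 (4 * real (max_deg V E))"
    and z1: "- ((4/\<epsilon>) * ln (4/\<beta>)) \<le> z NT" and z2: "z NT < (4/\<epsilon>) * ln (4/\<beta>)"
    and z3: "- ((4/\<epsilon>) * ln (4/\<beta>)) \<le> z (NQ k0)"
    and z4: "\<forall>j\<le>k0. z (NQ j) < (4/\<epsilon>) * ln (4 * log 2 (4 * real (max_deg V E)) / \<beta>)"
    and z5: "z NF < (6/\<epsilon>) * ln (2/\<beta>)" and z6: "- ((6/\<epsilon>) * ln (2/\<beta>)) \<le> z NF"
  shows "\<exists>k. alg_stops_at V E \<epsilon> \<beta> z k \<and>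
            (let t = alg_output V E \<epsilon> \<beta> \<delta> z k in
               t \<le> 6 * real (max_deg V E) + 24 / \<epsilon> * ln (log 2 (4 * real (max_deg V E)))
                      + 48 / \<epsilon> * ln (4 / \<beta>) + 12 / \<epsilon> * ln (max (1 / \<delta>) (2 / \<beta>)) + 1
             \<and> real (N_ge V E t) \<le> 24 / \<epsilon> * ln (log 2 (4 * real (max_deg V E)))
                      + 48 / \<epsilon> * ln (4 / \<beta>))"
proof -
  define D where "D = real (max_deg V E)"
  define L where "L = log 2 (4 * D)"
  define c1 where "c1 = (4/\<epsilon>) * ln (4/\<beta>)"
  define s where "s = (4/\<epsilon>) * ln (4 * L / \<beta>)"
  define Mx where "Mx = max (1 / \<delta>) (2 / \<beta>)"
  have D1': "D \<ge> 1" using D1 unfolding D_def by simp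
  have L2: "L \<ge> 2"
  proof -
    have "log 2 4 \<le> log 2 (4 * D)" using D1' by (intro log_le_cancel_iff[THEN iffD2]) auto
    moreover have "log 2 (4::real) = 2"
      by (metis log2_of_power_eq mult_2 numeral_Bit0 of_nat_numeral power2_eq_square) 
    ultimately show ?thesis unfolding L_def by linarith
  qed
  have lnL: "ln L \<ge> 0" using L2 by simp
  have T: "alg_T \<epsilon> \<beta> = - 2 * c1" unfolding alg_T_def c1_def by simp
  have sL: "s = (4/\<epsilon>) * ln L + c1" unfolding s_def c1_def using ln_split[of L \<beta>] L2 beta
    by (simp add: distrib_left)
  have lnM: "ln (2/\<beta>) \<le> ln Mx" unfolding Mx_def using beta delta by (subst ln_le_cancel_iff) (auto simp: less_max_iff_disj)
  have Q0: "Q_LP V E (2 ^ k0) = 0" using Q_zero[OF G] k0a by simp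
  have pass0: "alg_passes V E \<epsilon> \<beta> z k0"
    unfolding alg_passes_def T Q0 using z2 z3 unfolding c1_def by linarith
  define k where "k = (LEAST k. alg_passes V E \<epsilon> \<beta> z k)"
  have stop: "alg_stops_at V E \<epsilon> \<beta> z k" and kk0: "k \<le> k0"
    using first_stop[OF pass0] unfolding k_def by auto
  have passk: "alg_passes V E \<epsilon> \<beta> z k" using stop unfolding alg_stops_at_def by blast
  define \<tau> where "\<tau> = (2::real) ^ k"
  have tau0: "\<tau> \<ge> 0" unfolding \<tau>_def by simp
  have tauD: "\<tau> < 2 * D"
  proof -
    have "\<tau> \<le> 2 ^ k0" unfolding \<tau>_def using kk0 by (intro power_increasing) auto
    then show ?thesis using k0b unfolding D_def by linarith
  qed
  define Q where "Q = Q_LP V E \<tau>"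
  have Qle: "Q \<le> 0" unfolding Q_def using Q_le0[OF tau0] .
  have zk: "z (NQ k) < s" using z4 kk0 unfolding s_def L_def D_def by blast
  have Qgt: "Q + z (NQ k) > - 2 * c1 + z NT" using passk unfolding alg_passes_def T Q_def \<tau>_def by simp
  have absQ: "\<bar>Q\<bar> < 3 * c1 + s" using Qle Qgt zk z1 unfolding c1_def by linarith
  define t where "t = alg_output V E \<epsilon> \<beta> \<delta> z k"
  have t_eq: "t = 3 * \<tau> + 3 * \<bar>Q\<bar> + z NF + 6 / \<epsilon> * ln Mx + 1"
    unfolding t_def alg_output_def \<tau>_def Q_def Mx_def by simp
  have cF: "(6/\<epsilon>) * ln (2/\<beta>) \<le> 6 / \<epsilon> * ln Mx" using lnM eps by (simp add: divide_right_mono)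
  have tlow: "t \<ge> 3 * \<tau> + 3 * \<bar>Q_LP V E \<tau>\<bar> + 1" using t_eq z6 cF unfolding Q_def by linarith
  have N: "real (N_ge V E t) \<le> 3 * \<bar>Q\<bar>" unfolding Q_def using N_bound[OF G tau0 tlow] .
  have aux: "9 * c1 + 3 * s \<le> 24 / \<epsilon> * ln L + 48 / \<epsilon> * ln (4 / \<beta>)"
  proof -
    have "9 * c1 + 3 * s = 12 / \<epsilon> * ln L + 48 / \<epsilon> * ln (4 / \<beta>)"
      unfolding sL c1_def by (simp add: field_simps)
    moreover have "12 / \<epsilon> * ln L \<le> 24 / \<epsilon> * ln L" using lnL eps
      by (intro mult_right_mono divide_right_mono) auto
    ultimately show ?thesis by linarith
  qed
  have t_up: "t \<le> 6 * D + 24 / \<epsilon> * ln L + 48 / \<epsilon> * ln (4 / \<beta>) + 12 / \<epsilon> * ln Mx + 1"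
  proof -
    have "12 / \<epsilon> * ln Mx = 6 / \<epsilon> * ln Mx + 6 / \<epsilon> * ln Mx" by simp
    then show ?thesis using t_eq tauD absQ aux z5 cF by linarith
  qed
  have N_up: "real (N_ge V E t) \<le> 24 / \<epsilon> * ln L + 48 / \<epsilon> * ln (4 / \<beta>)"
    using N absQ aux by linarith
  show ?thesis
    apply (rule exI[of _ k])
    using stop t_up N_up unfolding Let_def t_def L_def D_def Mx_def by blast
qed

lemma pointwise2:
  fixes z :: "noise_idx \<Rightarrow> real"
  assumes G: "simple_graph V E"
    and eps: "\<epsilon> > 0" and beta: "0 < \<beta>" "\<beta> < 1" and delta: "0 < \<delta>" "\<delta> < 1"
    and pass: "alg_passes V E \<epsilon> \<beta> z k1"
    and z6: "- ((6/\<epsilon>) * ln (1/\<delta>)) \<le> z NF"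
  shows "\<exists>k. alg_stops_at V E \<epsilon> \<beta> z k \<and>
            (let t = alg_output V E \<epsilon> \<beta> \<delta> z k in
               t + real (N_ge V E t) \<le> 2 * t)"
proof -
  define Mx where "Mx = max (1 / \<delta>) (2 / \<beta>)"
  have lnM: "ln (1/\<delta>) \<le> ln Mx" unfolding Mx_def using beta delta by (subst ln_le_cancel_iff) (auto simp: less_max_iff_disj)
  define k where "k = (LEAST k. alg_passes V E \<epsilon> \<beta> z k)"
  have stop: "alg_stops_at V E \<epsilon> \<beta> z k"
    using first_stop[OF pass] unfolding k_def by auto
  define \<tau> where "\<tau> = (2::real) ^ k"
  have tau0: "\<tau> \<ge> 0" unfolding \<tau>_def by simp
  define Q where "Q = Q_LP V E \<tau>"
  define t where "t = alg_output V E \<epsilon> \<beta> \<delta> z k"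
  have t_eq: "t = 3 * \<tau> + 3 * \<bar>Q\<bar> + z NF + 6 / \<epsilon> * ln Mx + 1"
    unfolding t_def alg_output_def \<tau>_def Q_def Mx_def by simp
  have cF: "(6/\<epsilon>) * ln (1/\<delta>) \<le> 6 / \<epsilon> * ln Mx" using lnM eps by (simp add: divide_right_mono)
  have tlow: "t \<ge> 3 * \<tau> + 3 * \<bar>Q_LP V E \<tau>\<bar> + 1" using t_eq z6 cF unfolding Q_def by linarith
  have N: "real (N_ge V E t) \<le> 3 * \<bar>Q\<bar>" unfolding Q_def using N_bound[OF G tau0 tlow] .
  have "t + real (N_ge V E t) \<le> 2 * t" using N tlow tau0 unfolding Q_def by linarith
  then show ?thesis
    apply (intro exI[of _ k])
    using stop unfolding Let_def t_def by blast
qed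

lemma tailval: "(b::real) > 0 \<Longrightarrow> z > 0 \<Longrightarrow> exp (- (b * ln z) / b) / 2 = 1 / (2 * z)"
  by (simp add: exp_minus exp_ln inverse_eq_divide)

theorem mainTheorem8:
  fixes V :: "'a set" and E :: "'a set set"
    and M :: "'w measure" and X :: "noise_idx \<Rightarrow> 'w \<Rightarrow> real"
    and \<epsilon> \<beta> \<delta> :: real
  assumes eps: "\<epsilon> > 0"
    and beta: "0 < \<beta>" "\<beta> < 1"
    and delta: "0 < \<delta>" "\<delta> < 1"
    and G: "simple_graph V E" "E \<noteq> {}"
    and P: "prob_space M"
    and indep: "prob_space.indep_vars M (\<lambda>_. borel) X UNIV"
    and lapT: "distributed M lborel (X NT) (laplace_density (4 / \<epsilon>))"
    and lapQ: "\<And>k. distributed M lborel (X (NQ k)) (laplace_density (4 / \<epsilon>))"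
    and lapF: "distributed M lborel (X NF) (laplace_density (6 / \<epsilon>))"
  shows "measure M {\<omega>\<in>space M. \<exists>k. alg_stops_at V E \<epsilon> \<beta> (\<lambda>i. X i \<omega>) k \<and>
            (let t = alg_output V E \<epsilon> \<beta> \<delta> (\<lambda>i. X i \<omega>) k in
               t \<le> 6 * real (max_deg V E) + 24 / \<epsilon> * ln (log 2 (4 * real (max_deg V E)))
                      + 48 / \<epsilon> * ln (4 / \<beta>) + 12 / \<epsilon> * ln (max (1 / \<delta>) (2 / \<beta>)) + 1
             \<and> real (N_ge V E t) \<le> 24 / \<epsilon> * ln (log 2 (4 * real (max_deg V E)))
                      + 48 / \<epsilon> * ln (4 / \<beta>))} \<ge> 1 - \<beta>
       \<and> measure M {\<omega>\<in>space M. \<exists>k. alg_stops_at V E \<epsilon> \<beta> (\<lambda>i. X i \<omega>) k \<and>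
            (let t = alg_output V E \<epsilon> \<beta> \<delta> (\<lambda>i. X i \<omega>) k in
               t + real (N_ge V E t) \<le> 2 * t)} \<ge> 1 - \<delta>"
proof -
  interpret prob_space M by (rule P)
  have indep': "indep_vars (\<lambda>_. borel) X UNIV" using indep .
  have Xm[measurable]: "X i \<in> borel_measurable M" for i
    using indep' unfolding indep_vars_def2 by auto
  have finV: "finite V" using G(1) unfolding simple_graph_def by (rule conjunct1)
  define D where "D = max_deg V E"
  have D1: "1 \<le> D"
  proof -
    obtain e where eE: "e \<in> E" using G(2) by blast
    have GE: "\<forall>e\<in>E. \<exists>u w. e = {u, w} \<and> u \<noteq> w \<and> u \<in> V \<and> w \<in> V"
      using G(1) unfolding simple_graph_def by (rule conjunct2)
    from bspec[OF GE eE] obtain u w where uw: "e = {u, w}" "u \<in> V" by blast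
    have "e \<in> edges_at E u" using eE uw unfolding edges_at_def by simp
    moreover have "finite (edges_at E u)" using sg_finE[OF G(1)] unfolding edges_at_def by simp
    ultimately have "vdeg E u \<ge> 1" unfolding vdeg_def
      by (metis One_nat_def Suc_leI card_gt_0_iff empty_iff)
    then show ?thesis using vdeg_le_max[OF G(1) uw(2)] unfolding D_def by linarith
  qed
  define k0 where "k0 = (LEAST k. real D \<le> 2 ^ k)"
  have exk: "real D \<le> 2 ^ D"
  proof -
    have "D < 2 ^ D" by (rule less_exp)
    then have "real D < real (2 ^ D)" by linarith
    then show ?thesis by simp
  qed
  have k0a: "real D \<le> 2 ^ k0" unfolding k0_def by (rule LeastI[of _ D], rule exk)
  have k0b: "2 ^ k0 < 2 * real D"
  proof (cases k0)
    case 0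
    then show ?thesis using D1 by simp
  next
    case (Suc m)
    then have "\<not> real D \<le> 2 ^ m" using not_less_Least[of m "\<lambda>k. real D \<le> 2 ^ k"] unfolding k0_def by auto
    then show ?thesis using Suc by simp
  qed
  have k0c: "real (k0 + 1) \<le> log 2 (4 * real D)"
  proof -
    have "(2::real) powr real (k0 + 1) = 2 ^ (k0 + 1)" by (rule powr_realpow) simp
    also have "\<dots> = 2 * 2 ^ k0" by simp
    also have "\<dots> \<le> 4 * real D" using k0b by simp
    finally show ?thesis using D1 by (subst le_log_iff) auto
  qed
  define L where "L = log 2 (4 * real D)"
  have L2: "L \<ge> real (k0 + 1)" using k0c unfolding L_def .
  have Lpos: "L > 0" using L2 by simp
  define b where "b = 4 / \<epsilon>"
  define b' where "b' = 6 / \<epsilon>"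
  have bpos: "b > 0" "b' > 0" unfolding b_def b'_def using eps by auto
  define c1 where "c1 = b * ln (4/\<beta>)"
  define s where "s = b * ln (4 * L / \<beta>)"
  define cF where "cF = b' * ln (2/\<beta>)"
  have c1pos: "c1 \<ge> 0" unfolding c1_def using bpos beta by simp
  have spos: "s \<ge> 0"
  proof -
    have "4 * L / \<beta> \<ge> 1" using L2 beta by (simp add: field_simps)
    then show ?thesis unfolding s_def using bpos by simp
  qed
  have cFpos: "cF \<ge> 0" unfolding cF_def using bpos beta by simp
  define B1 where "B1 = {\<omega>\<in>space M. X NT \<omega> \<ge> c1}"
  define B2 where "B2 = {\<omega>\<in>space M. X NT \<omega> < - c1}"
  define B3 where "B3 = {\<omega>\<in>space M. X (NQ k0) \<omega> < - c1}"
  define B4 where "B4 = (\<lambda>j. {\<omega>\<in>space M. X (NQ j) \<omega> \<ge> s})"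
  define B5 where "B5 = {\<omega>\<in>space M. X NF \<omega> \<ge> cF}"
  define B6 where "B6 = {\<omega>\<in>space M. X NF \<omega> < - cF}"
  have Bm: "B1 \<in> events" "B2 \<in> events" "B3 \<in> events" "\<And>j. B4 j \<in> events" "B5 \<in> events" "B6 \<in> events"
    unfolding B1_def B2_def B3_def B4_def B5_def B6_def by measurable
  have pB1: "prob B1 = \<beta> / 8"
    unfolding B1_def using lap_upper[OF P lapT, of c1] bpos c1pos tailval[of b "4/\<beta>"] beta
    unfolding c1_def b_def by simp
  have pB2: "prob B2 \<le> \<beta> / 8"
    unfolding B2_def using lap_lower[OF P lapT, of c1] bpos c1pos tailval[of b "4/\<beta>"] beta
    unfolding c1_def b_def by simp
  have pB3: "prob B3 \<le> \<beta> / 8"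
    unfolding B3_def using lap_lower[OF P lapQ[of k0], of c1] bpos c1pos tailval[of b "4/\<beta>"] beta
    unfolding c1_def b_def by simp
  have pB4: "prob (B4 j) = \<beta> / (8 * L)" for j
    unfolding B4_def using lap_upper[OF P lapQ[of j], of s] bpos spos tailval[of b "4 * L/\<beta>"] beta Lpos
    unfolding s_def b_def by simp
  have pB5: "prob B5 = \<beta> / 4"
    unfolding B5_def using lap_upper[OF P lapF, of cF] bpos cFpos tailval[of b' "2/\<beta>"] beta
    unfolding cF_def b'_def by simp
  have pB6: "prob B6 \<le> \<beta> / 4"
    unfolding B6_def using lap_lower[OF P lapF, of cF] bpos cFpos tailval[of b' "2/\<beta>"] beta
    unfolding cF_def b'_def by simp
  define U4 where "U4 = (\<Union>j\<in>{..k0}. B4 j)"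
  have U4m: "U4 \<in> events" unfolding U4_def using Bm(4) by blast
  have pU4: "prob U4 \<le> \<beta> / 8"
  proof -
    have "prob U4 \<le> (\<Sum>j\<in>{..k0}. prob (B4 j))" unfolding U4_def
      by (rule finite_measure_subadditive_finite) (use Bm(4) in auto)
    also have "\<dots> = real (k0 + 1) * (\<beta> / (8 * L))" using pB4 by simp
    also have "\<dots> \<le> L * (\<beta> / (8 * L))" using L2 beta Lpos by (intro mult_right_mono) auto
    also have "\<dots> = \<beta> / 8" using Lpos by simp
    finally show ?thesis .
  qed
  define Bad where "Bad = B1 \<union> B2 \<union> B3 \<union> U4 \<union> B5 \<union> B6"
  have Badm: "Bad \<in> events" unfolding Bad_def using Bm U4m by blast
  have pBad: "prob Bad \<le> \<beta>"
  proof -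
    have "prob Bad \<le> prob B1 + prob B2 + prob B3 + prob U4 + prob B5 + prob B6"
      unfolding Bad_def using Bm U4m
      by (smt (verit, best) measure_Un_le sets.Un)
    then show ?thesis using pB1 pB2 pB3 pU4 pB5 pB6 by linarith
  qed
  define A1 where "A1 = {\<omega>\<in>space M. \<exists>k. alg_stops_at V E \<epsilon> \<beta> (\<lambda>i. X i \<omega>) k \<and>
            (let t = alg_output V E \<epsilon> \<beta> \<delta> (\<lambda>i. X i \<omega>) k in
               t \<le> 6 * real (max_deg V E) + 24 / \<epsilon> * ln (log 2 (4 * real (max_deg V E)))
                      + 48 / \<epsilon> * ln (4 / \<beta>) + 12 / \<epsilon> * ln (max (1 / \<delta>) (2 / \<beta>)) + 1
             \<and> real (N_ge V E t) \<le> 24 / \<epsilon> * ln (log 2 (4 * real (max_deg V E)))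
                      + 48 / \<epsilon> * ln (4 / \<beta>))}"
  define A2 where "A2 = {\<omega>\<in>space M. \<exists>k. alg_stops_at V E \<epsilon> \<beta> (\<lambda>i. X i \<omega>) k \<and>
            (let t = alg_output V E \<epsilon> \<beta> \<delta> (\<lambda>i. X i \<omega>) k in
               t + real (N_ge V E t) \<le> 2 * t)}"
  have Nsum: "real (N_ge V E t) = (\<Sum>v\<in>V. if t \<le> real (vdeg E v) then 1 else 0)" for t
    unfolding N_ge_def using finV by (simp add: sum.If_cases Int_def)
  have A1m: "A1 \<in> events"
    unfolding A1_def alg_stops_at_def alg_passes_def alg_output_def Let_def Nsum by measurable
  have A2m: "A2 \<in> events"
    unfolding A2_def alg_stops_at_def alg_passes_def alg_output_def Let_def Nsum by measurable
  have sub1: "space M - Bad \<subseteq> A1"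
  proof
    fix \<omega> assume w: "\<omega> \<in> space M - Bad"
    have "\<exists>k. alg_stops_at V E \<epsilon> \<beta> (\<lambda>i. X i \<omega>) k \<and>
            (let t = alg_output V E \<epsilon> \<beta> \<delta> (\<lambda>i. X i \<omega>) k in
               t \<le> 6 * real (max_deg V E) + 24 / \<epsilon> * ln (log 2 (4 * real (max_deg V E)))
                      + 48 / \<epsilon> * ln (4 / \<beta>) + 12 / \<epsilon> * ln (max (1 / \<delta>) (2 / \<beta>)) + 1
             \<and> real (N_ge V E t) \<le> 24 / \<epsilon> * ln (log 2 (4 * real (max_deg V E)))
                      + 48 / \<epsilon> * ln (4 / \<beta>))"
    proof (rule pointwise1[OF G(1) eps beta delta])
      show "1 \<le> max_deg V E" using D1 unfolding D_def .
      show "real (max_deg V E) \<le> 2 ^ k0" using k0a unfolding D_def .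
      show "2 ^ k0 < 2 * real (max_deg V E)" using k0b unfolding D_def .
      show "real (k0 + 1) \<le> log 2 (4 * real (max_deg V E))" using k0c unfolding D_def .
      show "- ((4/\<epsilon>) * ln (4/\<beta>)) \<le> X NT \<omega>" using w unfolding Bad_def B2_def c1_def b_def by auto
      show "X NT \<omega> < (4/\<epsilon>) * ln (4/\<beta>)" using w unfolding Bad_def B1_def c1_def b_def by auto
      show "- ((4/\<epsilon>) * ln (4/\<beta>)) \<le> X (NQ k0) \<omega>" using w unfolding Bad_def B3_def c1_def b_def by auto
      show "\<forall>j\<le>k0. X (NQ j) \<omega> < (4/\<epsilon>) * ln (4 * log 2 (4 * real (max_deg V E)) / \<beta>)"
      proof (intro allI impI)
        fix j assume "j \<le> k0"
        then have "\<omega> \<notin> B4 j" using w unfolding Bad_def U4_def by auto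
        then show "X (NQ j) \<omega> < (4/\<epsilon>) * ln (4 * log 2 (4 * real (max_deg V E)) / \<beta>)"
          using w unfolding B4_def s_def b_def L_def D_def by auto
      qed
      show "X NF \<omega> < (6/\<epsilon>) * ln (2/\<beta>)" using w unfolding Bad_def B5_def cF_def b'_def by auto
      show "- ((6/\<epsilon>) * ln (2/\<beta>)) \<le> X NF \<omega>" using w unfolding Bad_def B6_def cF_def b'_def by auto
    qed
    then show "\<omega> \<in> A1" using w unfolding A1_def by blast
  qed
  have part1: "prob A1 \<ge> 1 - \<beta>"
  proof -
    have "prob (space M - Bad) = 1 - prob Bad" using Badm by (rule prob_compl)
    moreover have "prob (space M - Bad) \<le> prob A1" using sub1 A1m by (rule finite_measure_mono)
    ultimately show ?thesis using pBad by linarith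
  qed
  define c where "c = b * ln (4/\<delta>)"
  define a where "a = c + 2 * c1"
  have cpos: "c \<ge> 0" unfolding c_def using bpos delta by simp
  have apos: "a \<ge> 0" unfolding a_def using cpos c1pos by simp
  define p where "p = 1 - exp (- a / b) / 2"
  have ex1: "exp (- a / b) \<le> 1" using apos bpos by simp
  have ex0: "exp (- a / b) > 0" by simp
  have p01: "0 \<le> p" "p < 1" unfolding p_def using ex1 ex0 by linarith+
  obtain n where n: "p ^ n < \<delta> / 4" using real_arch_pow_inv[of "\<delta>/4" p] p01 delta by auto
  have n0: "n > 0" using n delta by (cases n) auto
  define C1 where "C1 = {\<omega>\<in>space M. X NF \<omega> < - (b' * ln (1/\<delta>))}"
  define C2 where "C2 = {\<omega>\<in>space M. X NT \<omega> \<ge> c}"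
  define F where "F = (\<lambda>i. X i -` {..<a} \<inter> space M)"
  define J where "J = NQ ` {k0..<k0+n}"
  define C3 where "C3 = (\<Inter>i\<in>J. F i)"
  have Cm: "C1 \<in> events" "C2 \<in> events" unfolding C1_def C2_def by measurable
  have Fm: "F i \<in> events" for i unfolding F_def by measurable
  have Jne: "J \<noteq> {}" "finite J" unfolding J_def using n0 by auto
  have C3m: "C3 \<in> events" unfolding C3_def using Fm Jne by (intro sets.finite_INT) auto
  have pC1: "prob C1 \<le> \<delta> / 2"
  proof -
    have "1/\<delta> \<ge> 1" using delta by simp
    then have "b' * ln (1/\<delta>) \<ge> 0" using bpos by simp
    then show ?thesis
      unfolding C1_def using lap_lower[OF P lapF, of "b' * ln (1/\<delta>)"] bpos tailval[of b' "1/\<delta>"] delta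
      unfolding b'_def by simp
  qed
  have pC2: "prob C2 = \<delta> / 8"
    unfolding C2_def using lap_upper[OF P lapT, of c] bpos cpos tailval[of b "4/\<delta>"] delta
    unfolding c_def b_def by simp
  have pF: "prob (F (NQ j)) = p" for j
  proof -
    have e: "{\<omega>\<in>space M. X (NQ j) \<omega> \<ge> a} \<in> events" by measurable
    have "F (NQ j) = space M - {\<omega>\<in>space M. X (NQ j) \<omega> \<ge> a}" unfolding F_def by auto
    then have "prob (F (NQ j)) = 1 - prob {\<omega>\<in>space M. X (NQ j) \<omega> \<ge> a}" using prob_compl[OF e] by simp
    also have "\<dots> = p" unfolding p_def using lap_upper[OF P lapQ[of j], of a] bpos apos unfolding b_def by simp
    finally show ?thesis .
  qed
  have pC3: "prob C3 \<le> \<delta> / 4"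
  proof -
    have ind: "indep_sets (\<lambda>i. {X i -` A \<inter> space M | A. A \<in> sets borel}) UNIV"
      using indep' unfolding indep_vars_def2 by blast
    have "prob C3 = (\<Prod>i\<in>J. prob (F i))" unfolding C3_def
    proof (rule indep_setsD[OF ind])
      show "\<forall>j\<in>J. F j \<in> {X j -` A \<inter> space M | A. A \<in> sets borel}"
        unfolding F_def by (intro ballI CollectI exI[of _ "{..<a}"]) simp
    qed (use Jne in auto)
    also have "\<dots> = (\<Prod>j\<in>{k0..<k0+n}. prob (F (NQ j)))" unfolding J_def
      by (subst prod.reindex) (auto simp: inj_on_def)
    also have "\<dots> = p ^ n" using pF by simp
    finally show ?thesis using n by linarith
  qed
  have sub2: "space M - (C1 \<union> C2 \<union> C3) \<subseteq> A2"
  proof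
    fix \<omega> assume w: "\<omega> \<in> space M - (C1 \<union> C2 \<union> C3)"
    then have wsp: "\<omega> \<in> space M" by blast
    from w have "\<omega> \<notin> C3" by blast
    then obtain i where i: "i \<in> J" "\<omega> \<notin> F i" unfolding C3_def by blast
    then obtain j where ij: "i = NQ j" and j1: "j \<in> {k0..<k0+n}" unfolding J_def by blast
    have "\<not> X (NQ j) \<omega> < a" using i(2) wsp unfolding ij F_def by simp
    then have j: "j \<in> {k0..<k0+n}" "X (NQ j) \<omega> \<ge> a" using j1 by auto
    have Qj: "Q_LP V E (2 ^ j) = 0"
    proof (rule Q_zero[OF G(1)])
      have "(2::real) ^ k0 \<le> 2 ^ j" using j by (intro power_increasing) auto
      then show "real (max_deg V E) \<le> 2 ^ j" using k0a unfolding D_def by linarith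
    qed
    have XT: "X NT \<omega> < c" using w unfolding C2_def by auto
    have pass: "alg_passes V E \<epsilon> \<beta> (\<lambda>i. X i \<omega>) j"
    proof -
      have "alg_T \<epsilon> \<beta> = - 2 * c1" unfolding alg_T_def c1_def b_def by simp
      then show ?thesis unfolding alg_passes_def Qj using XT j(2) c1pos unfolding a_def by simp
    qed
    have zF: "- ((6/\<epsilon>) * ln (1/\<delta>)) \<le> X NF \<omega>" using w unfolding C1_def b'_def by auto
    show "\<omega> \<in> A2" using pointwise2[OF G(1) eps beta delta pass] zF wsp unfolding A2_def
      by simp
  qed
  have part2: "prob A2 \<ge> 1 - \<delta>"
  proof -
    have m: "C1 \<union> C2 \<union> C3 \<in> events" using Cm C3m by blast
    have "prob (space M - (C1 \<union> C2 \<union> C3)) = 1 - prob (C1 \<union> C2 \<union> C3)" using m by (rule prob_compl)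
    moreover have "prob (space M - (C1 \<union> C2 \<union> C3)) \<le> prob A2" using sub2 A2m by (rule finite_measure_mono)
    moreover have "prob (C1 \<union> C2 \<union> C3) \<le> prob C1 + prob C2 + prob C3"
      using Cm C3m by (smt (verit, best) measure_Un_le sets.Un)
    ultimately show ?thesis using pC1 pC2 pC3 delta by linarith
  qed
  show ?thesis using part1 part2 unfolding A1_def A2_def by blast
qed

end
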